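(* Let $(G_n)$ be a sequence of graphs with $\min_{u\in V}\delta_u=\omega(\log n)$, fix $p\in[0,1]$, and for each $n$ run the $(p,\mathcal B)$-Deterministic-Majority dynamics on $G_n$ from the configuration in which every node is $\mathcal R$. (Fast disruption) If $p>1/2$, then $\Pr(\mathrm{vol}(B^{(1)})=\mathrm{vol}(V))=1-o(1)$, and consequently $\Pr(\tau=1)=1-o(1)$. (Slow disruption) If $p<1/2$, then for every $K>0$, $\Pr(\forall t\le n^K:\ \mathrm{vol}(R^{(t)})=\mathrm{vol}(V))=1-o(1)$, and consequently $\Pr(\tau>n^K)=1-o(1)$.
   Context: $G_n=(V,E)$, $V=\{1,\dots,n\}$, $N(u)$ neighbourhood, $\delta_u=|N(u)|$, $\mathrm{vol}(S)=\sum_{v\in S}\delta_v$; asymptotics as $n\to\infty$. States in $\{\mathcal R,\mathcal B\}$; $R^{(t)},B^{(t)}$ are the sets of nodes in each state at round $t$, and $\tau=\inf\{t\ge0:\mathrm{vol}(B^{(t)})/\mathrm{vol}(V)>1/2\}$. $(p,\mathcal B)$-Deterministic-Majority: in each round $t\ge1$, every node $u$, for each of its neighbours $v$ independently, sees $v$ as $\mathcal B$ with probability $p$ and otherwise sees $v$'s true state at round $t-1$; $u$ adopts the state seen by the majority of its whole neighbourhood (ties broken by some fixed rule, e.g. uniformly at random). *)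

theory Defs
  imports "HOL-Probability.Probability" "HOL-Library.Landau_Symbols"
begin

text \<open>A sequence of graphs: G_n has vertex set V n = {1..n} and adjacency E n.
  A configuration is a map from nodes to bool, True meaning state B, False meaning state R.\<close>

definition V :: "nat \<Rightarrow> nat set" where
  "V n = {1..n}"

definition nbhd :: "(nat \<Rightarrow> nat \<Rightarrow> nat \<Rightarrow> bool) \<Rightarrow> nat \<Rightarrow> nat \<Rightarrow> nat set" where
  "nbhd E n u = {v \<in> V n. E n u v}"

definition deg :: "(nat \<Rightarrow> nat \<Rightarrow> nat \<Rightarrow> bool) \<Rightarrow> nat \<Rightarrow> nat \<Rightarrow> nat" where
  "deg E n u = card (nbhd E n u)"

definition vol :: "(nat \<Rightarrow> nat \<Rightarrow> nat \<Rightarrow> bool) \<Rightarrow> nat \<Rightarrow> nat set \<Rightarrow> nat" where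
  "vol E n S = (\<Sum>v\<in>S. deg E n v)"

definition min_deg :: "(nat \<Rightarrow> nat \<Rightarrow> nat \<Rightarrow> bool) \<Rightarrow> nat \<Rightarrow> nat" where
  "min_deg E n = Min (deg E n ` V n)"

definition Bset :: "nat \<Rightarrow> (nat \<Rightarrow> bool) \<Rightarrow> nat set" where
  "Bset n c = {u \<in> V n. c u}"

definition Rset :: "nat \<Rightarrow> (nat \<Rightarrow> bool) \<Rightarrow> nat set" where
  "Rset n c = {u \<in> V n. \<not> c u}"

definition node_update ::
  "(nat \<Rightarrow> nat \<Rightarrow> nat \<Rightarrow> bool) \<Rightarrow> real \<Rightarrow> (nat \<Rightarrow> nat \<Rightarrow> (nat \<Rightarrow> bool) \<Rightarrow> bool pmf)
     \<Rightarrow> nat \<Rightarrow> (nat \<Rightarrow> bool) \<Rightarrow> nat \<Rightarrow> bool pmf" where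
  "node_update E p tie n c u =
     Pi_pmf (nbhd E n u) False (\<lambda>_. bernoulli_pmf p) \<bind> (\<lambda>coin.
       let seenB = card {v \<in> nbhd E n u. coin v \<or> c v};
           seenR = card {v \<in> nbhd E n u. \<not> (coin v \<or> c v)}
       in if seenB > seenR then return_pmf True
          else if seenR > seenB then return_pmf False
          else tie n u c)"

definition step ::
  "(nat \<Rightarrow> nat \<Rightarrow> nat \<Rightarrow> bool) \<Rightarrow> real \<Rightarrow> (nat \<Rightarrow> nat \<Rightarrow> (nat \<Rightarrow> bool) \<Rightarrow> bool pmf)
     \<Rightarrow> nat \<Rightarrow> (nat \<Rightarrow> bool) \<Rightarrow> (nat \<Rightarrow> bool) pmf" where
  "step E p tie n c = Pi_pmf (V n) False (node_update E p tie n c)"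

text \<open>Distribution of the trajectory (configurations at rounds 0..T) starting from all-R;
  beyond the horizon T the configuration is frozen at its round-T value (so events about
  rounds \<le> T, and the events tau = 1 (T \<ge> 1) and tau > T, are described correctly).\<close>

primrec traj ::
  "(nat \<Rightarrow> nat \<Rightarrow> nat \<Rightarrow> bool) \<Rightarrow> real \<Rightarrow> (nat \<Rightarrow> nat \<Rightarrow> (nat \<Rightarrow> bool) \<Rightarrow> bool pmf)
     \<Rightarrow> nat \<Rightarrow> nat \<Rightarrow> (nat \<Rightarrow> nat \<Rightarrow> bool) pmf" where
  "traj E p tie n 0 = return_pmf (\<lambda>t u. False)"
| "traj E p tie n (Suc T) =
     traj E p tie n T \<bind> (\<lambda>x. step E p tie n (x T) \<bind>
       (\<lambda>c. return_pmf (\<lambda>t. if t \<le> T then x t else c)))"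

definition B_majority :: "(nat \<Rightarrow> nat \<Rightarrow> nat \<Rightarrow> bool) \<Rightarrow> nat \<Rightarrow> (nat \<Rightarrow> bool) \<Rightarrow> bool" where
  "B_majority E n c \<longleftrightarrow> real (vol E n (Bset n c)) / real (vol E n (V n)) > 1/2"

definition tau :: "(nat \<Rightarrow> nat \<Rightarrow> nat \<Rightarrow> bool) \<Rightarrow> nat \<Rightarrow> (nat \<Rightarrow> nat \<Rightarrow> bool) \<Rightarrow> enat" where
  "tau E n x = (if \<exists>t. B_majority E n (x t) then enat (LEAST t. B_majority E n (x t)) else \<infinity>)"

end

theory Submission
  imports Defs
begin

lemma bind_bound:
  fixes M :: "'a pmf" and f :: "'a \<Rightarrow> 'b pmf"
  assumes "\<And>x. x \<in> A \<Longrightarrow> measure_pmf.prob (f x) B \<le> e" and e0: "e \<ge> 0"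
  shows "measure_pmf.prob (bind_pmf M f) B \<le> measure_pmf.prob M (- A) + e"
proof -
  have "emeasure (measure_pmf (bind_pmf M f)) B = (\<integral>\<^sup>+x. emeasure (f x) B \<partial>M)" by simp
  also have "\<dots> \<le> (\<integral>\<^sup>+x. (indicator (-A) x + ennreal e) \<partial>M)"
  proof (rule nn_integral_mono)
    fix x show "emeasure (f x) B \<le> indicator (- A) x + ennreal e"
    proof (cases "x \<in> A")
      case True
      then show ?thesis using assms(1)[OF True] 
        by (simp add: measure_pmf.emeasure_eq_measure ennreal_leI)
    next
      case False
      then show ?thesis using measure_pmf.emeasure_le_1[of "f x" B]
        by (simp add: order_trans[OF _ add_increasing2])
    qed
  qed
  also have "\<dots> = emeasure M (-A) + ennreal e"
    by (subst nn_integral_add) (auto simp: measure_pmf.emeasure_space_1)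
  also have "\<dots> = ennreal (measure_pmf.prob M (- A) + e)"
    using e0 by (simp add: measure_pmf.emeasure_eq_measure ennreal_plus)
  finally have "ennreal (measure_pmf.prob (bind_pmf M f) B) \<le> ennreal (measure_pmf.prob M (- A) + e)"
    by (simp add: measure_pmf.emeasure_eq_measure)
  then show ?thesis using e0 by (subst (asm) ennreal_le_iff) (auto intro: add_nonneg_nonneg)
qed

lemma coin_tail_low:
  assumes N: "finite N" and p: "1/2 < p" "p \<le> 1"
  shows "measure_pmf.prob (Pi_pmf N dflt (\<lambda>_. bernoulli_pmf p)) {f. 2 * card {x\<in>N. f x} \<le> card N}
           \<le> exp (-2 * real (card N) * (p - 1/2)^2)"
proof (cases "card N = 0")
  case True then show ?thesis by simp
next
  case False
  let ?d = "card N"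
  have "measure_pmf.prob (Pi_pmf N dflt (\<lambda>_. bernoulli_pmf p)) {f. 2 * card {x\<in>N. f x} \<le> ?d}
     = measure_pmf.prob (map_pmf (\<lambda>f. card {x\<in>N. f x}) (Pi_pmf N dflt (\<lambda>_. bernoulli_pmf p))) {k. 2 * k \<le> ?d}"
    by simp
  also have "map_pmf (\<lambda>f. card {x\<in>N. f x}) (Pi_pmf N dflt (\<lambda>_. bernoulli_pmf p)) = binomial_pmf ?d p"
    by (rule binomial_pmf_altdef'[symmetric]) (use N p in auto)
  also have "{k. 2 * k \<le> ?d} = {x. real x / real ?d \<le> p - (p - 1/2)}"
    using False by (auto simp: field_simps)
  also have "measure_pmf.prob (binomial_pmf ?d p) \<dots> \<le> exp (-2 * real ?d * (p - 1/2)^2)"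
    using binomial_distribution.prob_le'[of p ?d "p - 1/2"] False p by (simp add: binomial_distribution_def)
  finally show ?thesis .
qed

lemma coin_tail_high:
  assumes N: "finite N" and p: "0 \<le> p" "p < 1/2"
  shows "measure_pmf.prob (Pi_pmf N dflt (\<lambda>_. bernoulli_pmf p)) {f. card N \<le> 2 * card {x\<in>N. f x}}
           \<le> exp (-2 * real (card N) * (1/2 - p)^2)"
proof (cases "card N = 0")
  case True then show ?thesis by simp
next
  case False
  let ?d = "card N"
  have "measure_pmf.prob (Pi_pmf N dflt (\<lambda>_. bernoulli_pmf p)) {f. ?d \<le> 2 * card {x\<in>N. f x}}
     = measure_pmf.prob (map_pmf (\<lambda>f. card {x\<in>N. f x}) (Pi_pmf N dflt (\<lambda>_. bernoulli_pmf p))) {k. ?d \<le> 2 * k}"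
    by simp
  also have "map_pmf (\<lambda>f. card {x\<in>N. f x}) (Pi_pmf N dflt (\<lambda>_. bernoulli_pmf p)) = binomial_pmf ?d p"
    by (rule binomial_pmf_altdef'[symmetric]) (use N p in auto)
  also have "{k. ?d \<le> 2 * k} = {x. real x / real ?d \<ge> p + (1/2 - p)}"
    using False by (auto simp: field_simps)
  also have "measure_pmf.prob (binomial_pmf ?d p) \<dots> \<le> exp (-2 * real ?d * (1/2 - p)^2)"
    using binomial_distribution.prob_ge'[of p ?d "1/2 - p"] False p by (simp add: binomial_distribution_def)
  finally show ?thesis .
qed

lemma card_split: "finite N \<Longrightarrow> card {v\<in>N. P v} + card {v\<in>N. \<not> P v} = card N"
proof -
  assume f: "finite N"
  have "N = {v\<in>N. P v} \<union> {v\<in>N. \<not> P v}" by auto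
  then have "card N = card ({v\<in>N. P v} \<union> {v\<in>N. \<not> P v})" by simp
  also have "\<dots> = card {v\<in>N. P v} + card {v\<in>N. \<not> P v}"
    by (rule card_Un_disjoint) (use f in auto)
  finally show ?thesis by simp
qed

lemma finite_nbhd: "finite (nbhd E n u)"
  unfolding nbhd_def V_def by auto

lemma node_false_bound:
  assumes c: "\<forall>v\<in>nbhd E n u. \<not> c v" and p: "1/2 < p" "p \<le> 1"
  shows "measure_pmf.prob (node_update E p tie n c u) {False} \<le> exp (-2 * real (deg E n u) * (p - 1/2)^2)"
proof -
  let ?N = "nbhd E n u"
  let ?A = "{coin. card ?N < 2 * card {v\<in>?N. coin v}}"
  have "measure_pmf.prob (node_update E p tie n c u) {False} \<le> 
        measure_pmf.prob (Pi_pmf ?N False (\<lambda>_. bernoulli_pmf p)) (- ?A) + 0"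
    unfolding node_update_def
  proof (rule bind_bound)
    fix coin assume "coin \<in> ?A"
    then have a: "card ?N < 2 * card {v\<in>?N. coin v}" by simp
    have e1: "{v \<in> ?N. coin v \<or> c v} = {v\<in>?N. coin v}" using c by auto
    have e2: "{v \<in> ?N. \<not> (coin v \<or> c v)} = {v\<in>?N. \<not> coin v}" using c by auto
    have "card {v\<in>?N. coin v} + card {v\<in>?N. \<not> coin v} = card ?N"
      by (rule card_split[OF finite_nbhd])
    with a have "card {v\<in>?N. \<not> coin v} < card {v\<in>?N. coin v}" by linarith
    then show "measure_pmf.prob (let seenB = card {v \<in> ?N. coin v \<or> c v};
           seenR = card {v \<in> ?N. \<not> (coin v \<or> c v)}
       in if seenB > seenR then return_pmf True
          else if seenR > seenB then return_pmf False
          else tie n u c) {False} \<le> 0"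
      unfolding e1 e2 by simp
  qed simp
  also have "- ?A = {f. 2 * card {x\<in>?N. f x} \<le> card ?N}" by auto
  finally show ?thesis using coin_tail_low[OF finite_nbhd[of E n u], where p=p and dflt=False] p by (simp add: deg_def)
qed


lemma node_true_bound:
  assumes c: "\<forall>v\<in>nbhd E n u. \<not> c v" and p: "0 \<le> p" "p < 1/2"
  shows "measure_pmf.prob (node_update E p tie n c u) {True} \<le> exp (-2 * real (deg E n u) * (1/2 - p)^2)"
proof -
  let ?N = "nbhd E n u"
  let ?A = "{coin. 2 * card {v\<in>?N. coin v} < card ?N}"
  have "measure_pmf.prob (node_update E p tie n c u) {True} \<le> 
        measure_pmf.prob (Pi_pmf ?N False (\<lambda>_. bernoulli_pmf p)) (- ?A) + 0"
    unfolding node_update_def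
  proof (rule bind_bound)
    fix coin assume "coin \<in> ?A"
    then have a: "2 * card {v\<in>?N. coin v} < card ?N" by simp
    have e1: "{v \<in> ?N. coin v \<or> c v} = {v\<in>?N. coin v}" using c by auto
    have e2: "{v \<in> ?N. \<not> (coin v \<or> c v)} = {v\<in>?N. \<not> coin v}" using c by auto
    have "card {v\<in>?N. coin v} + card {v\<in>?N. \<not> coin v} = card ?N"
      by (rule card_split[OF finite_nbhd])
    with a have "card {v\<in>?N. \<not> coin v} > card {v\<in>?N. coin v}" by linarith
    then show "measure_pmf.prob (let seenB = card {v \<in> ?N. coin v \<or> c v};
           seenR = card {v \<in> ?N. \<not> (coin v \<or> c v)}
       in if seenB > seenR then return_pmf True
          else if seenR > seenB then return_pmf False
          else tie n u c) {True} \<le> 0"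
      unfolding e1 e2 by simp
  qed simp
  also have "- ?A = {f. card ?N \<le> 2 * card {x\<in>?N. f x}}" by auto
  finally show ?thesis using coin_tail_high[OF finite_nbhd[of E n u], where p=p and dflt=False] p
    by (simp add: deg_def)
qed

lemma step_union:
  "measure_pmf.prob (step E p tie n c) {c'. \<exists>u\<in>V n. c' u = b}
     \<le> (\<Sum>u\<in>V n. measure_pmf.prob (node_update E p tie n c u) {b})"
proof -
  have fin: "finite (V n)" by (simp add: V_def)
  have "{c'. \<exists>u\<in>V n. c' u = b} = (\<Union>u\<in>V n. {c'. c' u = b})" by auto
  then have "measure_pmf.prob (step E p tie n c) {c'. \<exists>u\<in>V n. c' u = b}
     \<le> (\<Sum>u\<in>V n. measure_pmf.prob (step E p tie n c) {c'. c' u = b})"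
    using measure_pmf.finite_measure_subadditive_finite[OF fin, of "\<lambda>u. {c'. c' u = b}" "step E p tie n c"]
    by simp
  also have "\<dots> = (\<Sum>u\<in>V n. measure_pmf.prob (node_update E p tie n c u) {b})"
  proof (rule sum.cong)
    fix u assume u: "u \<in> V n"
    have "measure_pmf.prob (step E p tie n c) {c'. c' u = b}
        = measure_pmf.prob (map_pmf (\<lambda>f. f u) (step E p tie n c)) {b}"
      by (simp add: vimage_def)
    also have "map_pmf (\<lambda>f. f u) (step E p tie n c) = node_update E p tie n c u"
      unfolding step_def by (subst Pi_pmf_component[OF fin]) (use u in simp)
    finally show "measure_pmf.prob (step E p tie n c) {c'. c' u = b}
        = measure_pmf.prob (node_update E p tie n c u) {b}" .
  qed simp
  finally show ?thesis .
qed

lemma deg_ge_min: "u \<in> V n \<Longrightarrow> min_deg E n \<le> deg E n u"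
  unfolding min_deg_def by (rule Min_le) (auto simp: V_def)

lemma nbhd_sub: "nbhd E n u \<subseteq> V n" by (auto simp: nbhd_def)

lemma step_allB:
  assumes c: "\<forall>v\<in>V n. \<not> c v" and p: "1/2 < p" "p \<le> 1"
  shows "measure_pmf.prob (step E p tie n c) {c'. \<exists>u\<in>V n. c' u = False}
           \<le> real n * exp (-2 * real (min_deg E n) * (p - 1/2)^2)"
proof -
  have "measure_pmf.prob (step E p tie n c) {c'. \<exists>u\<in>V n. c' u = False}
     \<le> (\<Sum>u\<in>V n. measure_pmf.prob (node_update E p tie n c u) {False})" by (rule step_union)
  also have "\<dots> \<le> (\<Sum>u\<in>V n. exp (-2 * real (min_deg E n) * (p - 1/2)^2))"
  proof (rule sum_mono)
    fix u assume u: "u \<in> V n"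
    have "measure_pmf.prob (node_update E p tie n c u) {False} \<le> exp (-2 * real (deg E n u) * (p - 1/2)^2)"
      by (rule node_false_bound) (use c nbhd_sub[of E n u] p in auto)
    also have "\<dots> \<le> exp (-2 * real (min_deg E n) * (p - 1/2)^2)"
      using deg_ge_min[OF u, of E] by (intro exp_mono mult_right_mono) auto
    finally show "measure_pmf.prob (node_update E p tie n c u) {False} \<le> exp (-2 * real (min_deg E n) * (p - 1/2)^2)" .
  qed
  also have "\<dots> = real n * exp (-2 * real (min_deg E n) * (p - 1/2)^2)" by (simp add: V_def)
  finally show ?thesis .
qed

lemma step_allR:
  assumes c: "\<forall>v\<in>V n. \<not> c v" and p: "0 \<le> p" "p < 1/2"
  shows "measure_pmf.prob (step E p tie n c) {c'. \<exists>u\<in>V n. c' u = True}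
           \<le> real n * exp (-2 * real (min_deg E n) * (1/2 - p)^2)"
proof -
  have "measure_pmf.prob (step E p tie n c) {c'. \<exists>u\<in>V n. c' u = True}
     \<le> (\<Sum>u\<in>V n. measure_pmf.prob (node_update E p tie n c u) {True})" by (rule step_union)
  also have "\<dots> \<le> (\<Sum>u\<in>V n. exp (-2 * real (min_deg E n) * (1/2 - p)^2))"
  proof (rule sum_mono)
    fix u assume u: "u \<in> V n"
    have "measure_pmf.prob (node_update E p tie n c u) {True} \<le> exp (-2 * real (deg E n u) * (1/2 - p)^2)"
      by (rule node_true_bound) (use c nbhd_sub[of E n u] p in auto)
    also have "\<dots> \<le> exp (-2 * real (min_deg E n) * (1/2 - p)^2)"
      using deg_ge_min[OF u, of E] by (intro exp_mono mult_right_mono) auto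
    finally show "measure_pmf.prob (node_update E p tie n c u) {True} \<le> exp (-2 * real (min_deg E n) * (1/2 - p)^2)" .
  qed
  also have "\<dots> = real n * exp (-2 * real (min_deg E n) * (1/2 - p)^2)" by (simp add: V_def)
  finally show ?thesis .
qed

lemma traj_allR:
  assumes p: "0 \<le> p" "p < 1/2"
  shows "measure_pmf.prob (traj E p tie n T) (- {x. \<forall>t::nat. \<forall>u\<in>V n. \<not> x t u})
           \<le> real T * (real n * exp (-2 * real (min_deg E n) * (1/2 - p)^2))"
proof (induction T)
  case 0
  then show ?case by simp
next
  case (Suc T)
  let ?A = "{x. \<forall>t::nat. \<forall>u\<in>V n. \<not> x t u}"
  let ?e = "real n * exp (-2 * real (min_deg E n) * (1/2 - p)^2)"
  have "measure_pmf.prob (traj E p tie n (Suc T)) (- ?A) \<le> measure_pmf.prob (traj E p tie n T) (- ?A) + ?e"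
    unfolding traj.simps
  proof (rule bind_bound)
    fix x assume x: "x \<in> ?A"
    have "measure_pmf.prob (step E p tie n (x T) \<bind> (\<lambda>c. return_pmf (\<lambda>t. if t \<le> T then x t else c))) (- ?A)
       \<le> measure_pmf.prob (step E p tie n (x T)) (- {c. \<forall>u\<in>V n. \<not> c u}) + 0"
    proof (rule bind_bound)
      fix c assume "c \<in> {c. \<forall>u\<in>V n. \<not> c u}"
      then have "(\<lambda>t. if t \<le> T then x t else c) \<in> ?A" using x by auto
      then show "measure_pmf.prob (return_pmf (\<lambda>t. if t \<le> T then x t else c)) (- ?A) \<le> 0"
        by (simp add: indicator_def)
    qed simp
    also have "- {c. \<forall>u\<in>V n. \<not> c u} = {c'. \<exists>u\<in>V n. c' u = True}" by auto
    also have "measure_pmf.prob (step E p tie n (x T)) \<dots> \<le> ?e"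
      by (rule step_allR) (use x p in auto)
    finally show "measure_pmf.prob (step E p tie n (x T) \<bind> (\<lambda>c. return_pmf (\<lambda>t. if t \<le> T then x t else c))) (- ?A) \<le> ?e"
      by simp
  qed simp
  also have "\<dots> \<le> real T * ?e + ?e" using Suc by simp
  finally show ?case by (simp add: algebra_simps)
qed

lemma traj_one:
  "measure_pmf.prob (traj E p tie n 1) {x. x 0 = (\<lambda>u. False) \<and> (\<forall>u\<in>V n. x 1 u)}
     = measure_pmf.prob (step E p tie n (\<lambda>u. False)) {c. \<forall>u\<in>V n. c u}"
proof -
  have "traj E p tie n 1 = map_pmf (\<lambda>c t. if t \<le> 0 then (\<lambda>u. False) else c) (step E p tie n (\<lambda>u. False))"
    by (simp add: map_pmf_def bind_return_pmf)
  then show ?thesis by (simp add: vimage_def)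
qed

lemma asymp_zero:
  fixes md :: "nat \<Rightarrow> real"
  assumes md: "md \<in> \<omega>(\<lambda>n. ln (real n))" and md0: "\<And>n. md n \<ge> 0" and c: "c > 0" and K: "K \<ge> 0"
  shows "(\<lambda>n. real n powr K * (real n * exp (- c * md n))) \<longlonglongrightarrow> 0"
proof (rule tendsto_sandwich[of "\<lambda>n. 0" _ _ "\<lambda>n. inverse (real n)"])
  show "\<forall>\<^sub>F n in sequentially. 0 \<le> real n powr K * (real n * exp (- c * md n))" by simp
  show "(\<lambda>n. 0) \<longlonglongrightarrow> (0::real)" by simp
  show "(\<lambda>n. inverse (real n)) \<longlonglongrightarrow> 0" by (rule tendsto_inverse_0_at_top, rule filterlim_real_sequentially)
  have ev: "\<forall>\<^sub>F n in sequentially. norm (md n) \<ge> ((K + 2) / c) * norm (ln (real n))"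
    using md by (rule smallomegaD)
  show "\<forall>\<^sub>F n in sequentially. real n powr K * (real n * exp (- c * md n)) \<le> inverse (real n)"
    using ev eventually_ge_at_top[of "1::nat"]
  proof eventually_elim
    case (elim n)
    have n1: "real n \<ge> 1" using elim by simp
    have ln0: "ln (real n) \<ge> 0" using n1 by simp
    have "md n \<ge> ((K + 2) / c) * ln (real n)" using elim ln0 md0[of n] by simp
    then have "c * md n \<ge> (K + 2) * ln (real n)" using c by (simp add: field_simps)
    then have "exp (- c * md n) \<le> exp (- (K + 2) * ln (real n))" by (intro exp_mono) linarith
    also have "\<dots> = real n powr (- (K + 2))" using n1 by (simp add: powr_def)
    finally have e: "exp (- c * md n) \<le> real n powr (- (K + 2))" .
    have "real n powr K * (real n * exp (- c * md n)) \<le> real n powr K * (real n * real n powr (- (K + 2)))"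
      using e n1 by (intro mult_left_mono) auto
    also have "\<dots> = real n powr K * real n powr 1 * real n powr (- (K + 2))"
      using n1 by simp
    also have "\<dots> = real n powr (K + 1 + (- (K + 2)))"
      by (simp only: powr_add)
    also have "K + 1 + (- (K + 2)) = - 1" by simp
    also have "real n powr (- 1) = inverse (real n)" using n1 by (simp add: powr_minus)
    finally show ?case .
  qed
qed

lemma to_one:
  fixes P b :: "nat \<Rightarrow> real"
  assumes "b \<longlonglongrightarrow> 0" "\<forall>\<^sub>F n in sequentially. 1 - b n \<le> P n" "\<And>n. P n \<le> 1"
  shows "P \<longlonglongrightarrow> 1"
proof (rule tendsto_sandwich[of "\<lambda>n. 1 - b n" P sequentially "\<lambda>n. 1"])
  show "(\<lambda>n. 1 - b n) \<longlonglongrightarrow> 1" using tendsto_diff[OF tendsto_const assms(1), of 1] by simp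
qed (use assms in auto)

lemma Bset_empty: "\<forall>u\<in>V n. \<not> c u \<Longrightarrow> \<not> B_majority E n c"
proof -
  assume "\<forall>u\<in>V n. \<not> c u"
  then have "Bset n c = {}" by (auto simp: Bset_def)
  then show ?thesis by (simp add: B_majority_def vol_def)
qed

theorem proposition6p2:
  fixes E :: "nat \<Rightarrow> nat \<Rightarrow> nat \<Rightarrow> bool"
    and p :: real
    and tie :: "nat \<Rightarrow> nat \<Rightarrow> (nat \<Rightarrow> bool) \<Rightarrow> bool pmf"
  assumes sym: "\<And>n u v. E n u v \<longleftrightarrow> E n v u"
    and irrefl: "\<And>n u. \<not> E n u u"
    and mindeg: "(\<lambda>n. real (min_deg E n)) \<in> \<omega>(\<lambda>n. ln (real n))"
    and p01: "0 \<le> p" "p \<le> 1"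
  shows
    "(p > 1/2 \<longrightarrow>
        (\<lambda>n. measure_pmf.prob (traj E p tie n 1)
                {x. vol E n (Bset n (x 1)) = vol E n (V n)}) \<longlonglongrightarrow> 1
      \<and> (\<lambda>n. measure_pmf.prob (traj E p tie n 1) {x. tau E n x = 1}) \<longlonglongrightarrow> 1)
   \<and> (p < 1/2 \<longrightarrow> (\<forall>K::real. K > 0 \<longrightarrow>
        (\<lambda>n. measure_pmf.prob (traj E p tie n (nat \<lfloor>real n powr K\<rfloor>))
                {x. \<forall>t::nat. real t \<le> real n powr K \<longrightarrow> vol E n (Rset n (x t)) = vol E n (V n)})
           \<longlonglongrightarrow> 1
      \<and> (\<lambda>n. measure_pmf.prob (traj E p tie n (nat \<lfloor>real n powr K\<rfloor>))
                {x. case tau E n x of enat t \<Rightarrow> real t > real n powr K | \<infinity> \<Rightarrow> True})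
           \<longlonglongrightarrow> 1))"
  proof -
  let ?md = "\<lambda>n. real (min_deg E n)"
  have md0: "\<And>n. ?md n \<ge> 0" by simp
  have part1: "(\<lambda>n. measure_pmf.prob (traj E p tie n 1)
                {x::nat \<Rightarrow> nat \<Rightarrow> bool. vol E n (Bset n (x 1)) = vol E n (V n)}) \<longlonglongrightarrow> 1
      \<and> (\<lambda>n. measure_pmf.prob (traj E p tie n 1) {x::nat \<Rightarrow> nat \<Rightarrow> bool. tau E n x = 1}) \<longlonglongrightarrow> 1"
    if p2: "p > 1/2"
  proof -
    define c where "c = 2 * (p - 1/2)^2"
    have c0: "c > 0" using p2 by (simp add: c_def)
    let ?b = "\<lambda>n. real n powr 0 * (real n * exp (- c * ?md n))"
    have b0: "?b \<longlonglongrightarrow> 0" by (rule asymp_zero[OF mindeg md0 c0]) simp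
    let ?A = "{x::nat \<Rightarrow> nat \<Rightarrow> bool. x 0 = (\<lambda>u. False) \<and> (\<forall>u\<in>V n. x 1 u)}"
    have PA: "1 - ?b n \<le> measure_pmf.prob (traj E p tie n 1) {x::nat \<Rightarrow> nat \<Rightarrow> bool. x 0 = (\<lambda>u. False) \<and> (\<forall>u\<in>V n. x 1 u)}"
      if n1: "n \<ge> 1" for n
    proof -
      have "{c. \<forall>u\<in>V n. c u} = UNIV - {c'. \<exists>u\<in>V n. c' u = False}" by auto
      then have "measure_pmf.prob (step E p tie n (\<lambda>u. False)) {c. \<forall>u\<in>V n. c u}
          = 1 - measure_pmf.prob (step E p tie n (\<lambda>u. False)) {c'. \<exists>u\<in>V n. c' u = False}"
        using measure_pmf.prob_compl[of "{c'. \<exists>u\<in>V n. c' u = False}" "step E p tie n (\<lambda>u. False)"]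
        by simp
      moreover have "measure_pmf.prob (step E p tie n (\<lambda>u. False)) {c'. \<exists>u\<in>V n. c' u = False}
           \<le> real n * exp (-2 * real (min_deg E n) * (p - 1/2)^2)"
        by (rule step_allB) (use p2 p01 in auto)
      moreover have "?b n = real n * exp (-2 * real (min_deg E n) * (p - 1/2)^2)"
        using n1 by (simp add: c_def mult_ac)
      moreover note traj_one[of E p tie n]
      ultimately show ?thesis by linarith
    qed
    have ev1: "\<forall>\<^sub>F n in sequentially. 1 - ?b n \<le> measure_pmf.prob (traj E p tie n 1)
                {x::nat \<Rightarrow> nat \<Rightarrow> bool. vol E n (Bset n (x 1)) = vol E n (V n)}"
      using eventually_ge_at_top[of "1::nat"]
    proof eventually_elim
      case (elim n)
      have "measure_pmf.prob (traj E p tie n 1) {x::nat \<Rightarrow> nat \<Rightarrow> bool. x 0 = (\<lambda>u. False) \<and> (\<forall>u\<in>V n. x 1 u)}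
          \<le> measure_pmf.prob (traj E p tie n 1) {x::nat \<Rightarrow> nat \<Rightarrow> bool. vol E n (Bset n (x 1)) = vol E n (V n)}"
      proof (rule measure_pmf.finite_measure_mono)
        show "{x::nat \<Rightarrow> nat \<Rightarrow> bool. x 0 = (\<lambda>u. False) \<and> (\<forall>u\<in>V n. x 1 u)} \<subseteq> {x::nat \<Rightarrow> nat \<Rightarrow> bool. vol E n (Bset n (x 1)) = vol E n (V n)}"
        proof
          fix x :: "nat \<Rightarrow> nat \<Rightarrow> bool" assume "x \<in> {x::nat \<Rightarrow> nat \<Rightarrow> bool. x 0 = (\<lambda>u. False) \<and> (\<forall>u\<in>V n. x 1 u)}"
          then have "Bset n (x 1) = V n" by (auto simp: Bset_def)
          then show "x \<in> {x::nat \<Rightarrow> nat \<Rightarrow> bool. vol E n (Bset n (x 1)) = vol E n (V n)}" by simp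
        qed
      qed simp
      then show ?case using PA[OF elim] by linarith
    qed
    have evmd: "\<forall>\<^sub>F n in sequentially. norm (?md n) \<ge> 1 * norm (ln (real n))"
      using mindeg by (rule smallomegaD)
    have ev2: "\<forall>\<^sub>F n in sequentially. 1 - ?b n \<le> measure_pmf.prob (traj E p tie n 1) {x::nat \<Rightarrow> nat \<Rightarrow> bool. tau E n x = 1}"
      using eventually_ge_at_top[of "3::nat"] evmd
    proof eventually_elim
      case (elim n)
      have n1: "n \<ge> 1" using elim by simp
      have l3: "ln (real n) \<ge> ln 3" using elim by simp
      have "ln (3::real) \<ge> 1" using ln_ge_iff[of 3 1] exp_le by simp
      with l3 have lnn: "ln (real n) \<ge> 1" by linarith
      have "?md n \<ge> ln (real n)" using elim lnn by simp
      with lnn have "?md n \<ge> 1" by linarith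
      then have mdpos: "min_deg E n \<ge> 1" by simp
      have "1 \<in> V n" using n1 by (simp add: V_def)
      then have "deg E n 1 \<ge> 1" using deg_ge_min[of 1 n E] mdpos by simp
      moreover have "deg E n 1 \<le> vol E n (V n)" unfolding vol_def
        using \<open>1 \<in> V n\<close> by (intro member_le_sum) (auto simp: V_def)
      ultimately have volpos: "vol E n (V n) > 0" by simp
      have "measure_pmf.prob (traj E p tie n 1) {x::nat \<Rightarrow> nat \<Rightarrow> bool. x 0 = (\<lambda>u. False) \<and> (\<forall>u\<in>V n. x 1 u)}
          \<le> measure_pmf.prob (traj E p tie n 1) {x::nat \<Rightarrow> nat \<Rightarrow> bool. tau E n x = 1}"
      proof (rule measure_pmf.finite_measure_mono)
        show "{x::nat \<Rightarrow> nat \<Rightarrow> bool. x 0 = (\<lambda>u. False) \<and> (\<forall>u\<in>V n. x 1 u)} \<subseteq> {x::nat \<Rightarrow> nat \<Rightarrow> bool. tau E n x = 1}"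
        proof
          fix x :: "nat \<Rightarrow> nat \<Rightarrow> bool" assume x: "x \<in> {x::nat \<Rightarrow> nat \<Rightarrow> bool. x 0 = (\<lambda>u. False) \<and> (\<forall>u\<in>V n. x 1 u)}"
          then have "Bset n (x 1) = V n" by (auto simp: Bset_def)
          then have b1: "B_majority E n (x 1)" using volpos by (simp add: B_majority_def)
          have b0: "\<not> B_majority E n (x 0)" by (rule Bset_empty) (use x in auto)
          have "(LEAST t. B_majority E n (x t)) = 1"
          proof (rule Least_equality)
            show "B_majority E n (x 1)" by (rule b1)
            fix y assume "B_majority E n (x y)"
            then show "1 \<le> y" using b0 by (cases y) auto
          qed
          then show "x \<in> {x::nat \<Rightarrow> nat \<Rightarrow> bool. tau E n x = 1}" using b1 by (auto simp: tau_def one_enat_def)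
        qed
      qed simp
      then show ?case using PA[OF n1] by linarith
    qed
    show ?thesis
      by (intro conjI to_one[OF b0] ev1 ev2) auto
  qed
  have part2: "(\<lambda>n. measure_pmf.prob (traj E p tie n (nat \<lfloor>real n powr K\<rfloor>))
                {x::nat \<Rightarrow> nat \<Rightarrow> bool. \<forall>t::nat. real t \<le> real n powr K \<longrightarrow> vol E n (Rset n (x t)) = vol E n (V n)})
           \<longlonglongrightarrow> 1
      \<and> (\<lambda>n. measure_pmf.prob (traj E p tie n (nat \<lfloor>real n powr K\<rfloor>))
                {x::nat \<Rightarrow> nat \<Rightarrow> bool. case tau E n x of enat t \<Rightarrow> real t > real n powr K | \<infinity> \<Rightarrow> True})
           \<longlonglongrightarrow> 1"
    if p2: "p < 1/2" and K: "K > 0" for K :: real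
  proof -
    define c where "c = 2 * (1/2 - p)^2"
    have c0: "c > 0" using p2 by (simp add: c_def)
    let ?b = "\<lambda>n. real n powr K * (real n * exp (- c * ?md n))"
    have b0: "?b \<longlonglongrightarrow> 0" by (rule asymp_zero[OF mindeg md0 c0]) (use K in simp)
    let ?A = "{x::nat \<Rightarrow> nat \<Rightarrow> bool. \<forall>t::nat. \<forall>u\<in>V n. \<not> x t u}"
    have PA: "1 - ?b n \<le> measure_pmf.prob (traj E p tie n (nat \<lfloor>real n powr K\<rfloor>)) {x::nat \<Rightarrow> nat \<Rightarrow> bool. \<forall>t::nat. \<forall>u\<in>V n. \<not> x t u}"
      for n
    proof -
      let ?T = "nat \<lfloor>real n powr K\<rfloor>"
      let ?M = "traj E p tie n ?T"
      have "measure_pmf.prob ?M {x::nat \<Rightarrow> nat \<Rightarrow> bool. \<forall>t::nat. \<forall>u\<in>V n. \<not> x t u}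
          = 1 - measure_pmf.prob ?M (- {x::nat \<Rightarrow> nat \<Rightarrow> bool. \<forall>t::nat. \<forall>u\<in>V n. \<not> x t u})"
        using measure_pmf.prob_compl[of "- {x::nat \<Rightarrow> nat \<Rightarrow> bool. \<forall>t::nat. \<forall>u\<in>V n. \<not> x t u}" ?M]
        by (simp add: Compl_eq_Diff_UNIV[symmetric])
      moreover have "measure_pmf.prob ?M (- {x::nat \<Rightarrow> nat \<Rightarrow> bool. \<forall>t::nat. \<forall>u\<in>V n. \<not> x t u})
          \<le> real ?T * (real n * exp (-2 * real (min_deg E n) * (1/2 - p)^2))"
        by (rule traj_allR) (use p2 p01 in auto)
      moreover have "real ?T \<le> real n powr K"
      proof -
        have "real ?T = real_of_int \<lfloor>real n powr K\<rfloor>" by simp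
        also have "\<dots> \<le> real n powr K" by (rule of_int_floor_le)
        finally show ?thesis .
      qed
      moreover have "- c * ?md n = -2 * real (min_deg E n) * (1/2 - p)^2" by (simp add: c_def)
      moreover have "real ?T * (real n * exp (-2 * real (min_deg E n) * (1/2 - p)^2)) \<le> ?b n"
        using calculation(3,4) by (metis mult_right_mono exp_ge_zero mult_nonneg_nonneg of_nat_0_le_iff)
      ultimately show ?thesis by linarith
    qed
    have ev1: "\<forall>\<^sub>F n in sequentially. 1 - ?b n \<le> measure_pmf.prob (traj E p tie n (nat \<lfloor>real n powr K\<rfloor>))
                {x::nat \<Rightarrow> nat \<Rightarrow> bool. \<forall>t::nat. real t \<le> real n powr K \<longrightarrow> vol E n (Rset n (x t)) = vol E n (V n)}"
    proof (rule always_eventually, rule allI)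
      fix n
      have "measure_pmf.prob (traj E p tie n (nat \<lfloor>real n powr K\<rfloor>)) {x::nat \<Rightarrow> nat \<Rightarrow> bool. \<forall>t::nat. \<forall>u\<in>V n. \<not> x t u}
          \<le> measure_pmf.prob (traj E p tie n (nat \<lfloor>real n powr K\<rfloor>))
                {x::nat \<Rightarrow> nat \<Rightarrow> bool. \<forall>t::nat. real t \<le> real n powr K \<longrightarrow> vol E n (Rset n (x t)) = vol E n (V n)}"
      proof (rule measure_pmf.finite_measure_mono)
        show "{x::nat \<Rightarrow> nat \<Rightarrow> bool. \<forall>t::nat. \<forall>u\<in>V n. \<not> x t u} \<subseteq> {x::nat \<Rightarrow> nat \<Rightarrow> bool. \<forall>t::nat. real t \<le> real n powr K \<longrightarrow> vol E n (Rset n (x t)) = vol E n (V n)}"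
        proof
          fix x :: "nat \<Rightarrow> nat \<Rightarrow> bool" assume x: "x \<in> {x::nat \<Rightarrow> nat \<Rightarrow> bool. \<forall>t::nat. \<forall>u\<in>V n. \<not> x t u}"
          then have "\<And>t. Rset n (x t) = V n" by (auto simp: Rset_def)
          then show "x \<in> {x::nat \<Rightarrow> nat \<Rightarrow> bool. \<forall>t::nat. real t \<le> real n powr K \<longrightarrow> vol E n (Rset n (x t)) = vol E n (V n)}" by simp
        qed
      qed simp
      then show "1 - ?b n \<le> measure_pmf.prob (traj E p tie n (nat \<lfloor>real n powr K\<rfloor>))
                {x::nat \<Rightarrow> nat \<Rightarrow> bool. \<forall>t::nat. real t \<le> real n powr K \<longrightarrow> vol E n (Rset n (x t)) = vol E n (V n)}"
        using PA[of n] by linarith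
    qed
    have ev2: "\<forall>\<^sub>F n in sequentially. 1 - ?b n \<le> measure_pmf.prob (traj E p tie n (nat \<lfloor>real n powr K\<rfloor>))
                {x::nat \<Rightarrow> nat \<Rightarrow> bool. case tau E n x of enat t \<Rightarrow> real t > real n powr K | \<infinity> \<Rightarrow> True}"
    proof (rule always_eventually, rule allI)
      fix n
      have "measure_pmf.prob (traj E p tie n (nat \<lfloor>real n powr K\<rfloor>)) {x::nat \<Rightarrow> nat \<Rightarrow> bool. \<forall>t::nat. \<forall>u\<in>V n. \<not> x t u}
          \<le> measure_pmf.prob (traj E p tie n (nat \<lfloor>real n powr K\<rfloor>))
                {x::nat \<Rightarrow> nat \<Rightarrow> bool. case tau E n x of enat t \<Rightarrow> real t > real n powr K | \<infinity> \<Rightarrow> True}"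
      proof (rule measure_pmf.finite_measure_mono)
        show "{x::nat \<Rightarrow> nat \<Rightarrow> bool. \<forall>t::nat. \<forall>u\<in>V n. \<not> x t u} \<subseteq> {x::nat \<Rightarrow> nat \<Rightarrow> bool. case tau E n x of enat t \<Rightarrow> real t > real n powr K | \<infinity> \<Rightarrow> True}"
        proof
          fix x :: "nat \<Rightarrow> nat \<Rightarrow> bool" assume x: "x \<in> {x::nat \<Rightarrow> nat \<Rightarrow> bool. \<forall>t::nat. \<forall>u\<in>V n. \<not> x t u}"
          then have "\<And>t. \<not> B_majority E n (x t)" by (intro Bset_empty) auto
          then have "tau E n x = \<infinity>" by (simp add: tau_def)
          then show "x \<in> {x::nat \<Rightarrow> nat \<Rightarrow> bool. case tau E n x of enat t \<Rightarrow> real t > real n powr K | \<infinity> \<Rightarrow> True}" by simp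
        qed
      qed simp
      then show "1 - ?b n \<le> measure_pmf.prob (traj E p tie n (nat \<lfloor>real n powr K\<rfloor>))
                {x::nat \<Rightarrow> nat \<Rightarrow> bool. case tau E n x of enat t \<Rightarrow> real t > real n powr K | \<infinity> \<Rightarrow> True}"
        using PA[of n] by linarith
    qed
    show ?thesis
      by (intro conjI to_one[OF b0] ev1 ev2) auto
  qed
  show ?thesis using part1 part2 by blast
qed
end
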